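(* Let $\lambda<0$ and let $p(x;\theta)=(1+\lambda\,\theta\cdot F(x))_+^{1/\lambda}e^{-\varphi(\theta)}$, $\theta\in\Theta\subset\mathbb{R}^d$, be a $\lambda$-exponential family satisfying the standing assumptions described in the context. Let $x_1,\ldots,x_n\in\mathcal{S}$ be data points, $y_i=F(x_i)$, and let $$\ell(\theta)=\sum_{i=1}^n\Big(\tfrac{1}{\lambda}\log(1+\lambda\,\theta\cdot y_i)-\varphi(\theta)\Big)$$ be the log-likelihood. Given $\theta(0)\in\Theta$, define the fixed-point iteration, for $k\ge 0$, $$\eta(k+1):=\sum_{i=1}^n w_i(\theta(k))\,y_i,\qquad \theta(k+1):=\nabla^{(\lambda)}\psi(\eta(k+1)),$$ where $w_i(\theta):=\dfrac{1/(1+\lambda\,\theta\cdot y_i)}{\sum_{j=1}^n 1/(1+\lambda\,\theta\cdot y_j)}$, and set $\eta(0)=\nabla^{(\lambda)}\varphi(\theta(0))$. Then for every $k\ge0$, $\ell(\theta(k+1))>\ell(\theta(k))$ unless $\theta(k)$ already satisfies the fixed-point condition $\nabla^{(\lambda)}\varphi(\theta(k))=\sum_{i=1}^n w_i(\theta(k))\,y_i$.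
   Context: Setting: $\mathcal{X}$ is a state space with reference measure $\nu$, $F=(F_1,\ldots,F_d):\mathcal{X}\to\mathbb{R}^d$ is a vector of statistics, $z_+=\max\{z,0\}$, and $\varphi(\theta)$ is defined by the normalization $\int_{\mathcal{X}}p(x;\theta)\,d\nu(x)=1$. The $\lambda$-gradient of a differentiable function $f$ is $\nabla^{(\lambda)}f(\theta):=\nabla f(\theta)/(1-\lambda\nabla f(\theta)\cdot\theta)$. Standing assumptions: $\lambda<0$; $\Theta=\{\theta\in\mathbb{R}^d:\int(1+\lambda\theta\cdot F(x))_+^{1/\lambda}d\nu(x)<\infty\}$ is the natural parameter set; the family satisfies the regularity condition of Wong and Zhang (2022, Condition III.10), under which $\varphi$ is differentiable on $\Theta$ with $1-\lambda\nabla\varphi(\theta)\cdot\theta>0$, the dual potential $\psi(\eta):=\sup_{\theta'\in\Theta}\{\frac1\lambda\log(1+\lambda\theta'\cdot\eta)-\varphi(\theta')\}$ (the $\lambda$-conjugate of $\varphi$) is such that $\frac1\lambda(e^{\lambda\psi}-1)$ is strictly convex on $\Xi$, and $\nabla^{(\lambda)}\varphi:\Theta\to\Xi$ is a diffeomorphism with inverse $\nabla^{(\lambda)}\psi$; moreover the dual parameter set $\Xi:=\nabla^{(\lambda)}\varphi(\Theta)$ is convex and contains the common support $\mathcal{S}:=\{x\in\mathcal{X}:p(x;\theta)>0\}$ of the family (so the iterates are well defined, with $\eta(k)\in\Xi$, $\theta(k)\in\Theta$). *)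

theory Defs
  imports "HOL-Analysis.Analysis"
begin

definition pos_part :: "real \<Rightarrow> real" where
  "pos_part z = max z 0"

text \<open>Unnormalized density (1 + l * theta.F(x))_+^(1/l); the value is 0 where the
  positive part vanishes (Isabelle convention 0 powr a = 0, matching p = 0 off the support).\<close>
definition lam_kernel :: "real \<Rightarrow> ('x \<Rightarrow> 'a::euclidean_space) \<Rightarrow> 'a \<Rightarrow> 'x \<Rightarrow> real" where
  "lam_kernel l F \<theta> x = pos_part (1 + l * (\<theta> \<bullet> F x)) powr (1 / l)"

definition nat_param_set :: "real \<Rightarrow> 'x measure \<Rightarrow> ('x \<Rightarrow> 'a::euclidean_space) \<Rightarrow> 'a set" where
  "nat_param_set l \<nu> F = {\<theta>. (\<integral>\<^sup>+ x. ennreal (lam_kernel l F \<theta> x) \<partial>\<nu>) < \<infinity>}"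

definition lam_phi :: "real \<Rightarrow> 'x measure \<Rightarrow> ('x \<Rightarrow> 'a::euclidean_space) \<Rightarrow> 'a \<Rightarrow> real" where
  "lam_phi l \<nu> F \<theta> = ln (enn2real (\<integral>\<^sup>+ x. ennreal (lam_kernel l F \<theta> x) \<partial>\<nu>))"

definition lam_density :: "real \<Rightarrow> 'x measure \<Rightarrow> ('x \<Rightarrow> 'a::euclidean_space) \<Rightarrow> 'a \<Rightarrow> 'x \<Rightarrow> real" where
  "lam_density l \<nu> F \<theta> x = lam_kernel l F \<theta> x * exp (- lam_phi l \<nu> F \<theta>)"

definition lam_psi :: "real \<Rightarrow> 'x measure \<Rightarrow> ('x \<Rightarrow> 'a::euclidean_space) \<Rightarrow> 'a \<Rightarrow> real" where
  "lam_psi l \<nu> F \<eta> = (SUP \<theta>'\<in>{\<theta>'\<in>nat_param_set l \<nu> F. 1 + l * (\<theta>' \<bullet> \<eta>) > 0}.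
      (1 / l) * ln (1 + l * (\<theta>' \<bullet> \<eta>)) - lam_phi l \<nu> F \<theta>')"

text \<open>lambda-gradient, given the ordinary gradient g = grad f(theta):
   grad^(l) f(theta) = g / (1 - l * g.theta).\<close>
definition lam_grad :: "real \<Rightarrow> 'a::euclidean_space \<Rightarrow> 'a \<Rightarrow> 'a" where
  "lam_grad l g \<theta> = (1 / (1 - l * (g \<bullet> \<theta>))) *\<^sub>R g"

definition strictly_convex_on :: "'a::real_vector set \<Rightarrow> ('a \<Rightarrow> real) \<Rightarrow> bool" where
  "strictly_convex_on S f \<longleftrightarrow> (\<forall>x\<in>S. \<forall>y\<in>S. \<forall>t. x \<noteq> y \<and> 0 < t \<and> t < 1 \<longrightarrow>
      f ((1 - t) *\<^sub>R x + t *\<^sub>R y) < (1 - t) * f x + t * f y)"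

definition loglik :: "real \<Rightarrow> ('a::euclidean_space \<Rightarrow> real) \<Rightarrow> nat \<Rightarrow> (nat \<Rightarrow> 'a) \<Rightarrow> 'a \<Rightarrow> real" where
  "loglik l \<phi> n y \<theta> = (\<Sum>i<n. (1 / l) * ln (1 + l * (\<theta> \<bullet> y i)) - \<phi> \<theta>)"

definition weight :: "real \<Rightarrow> nat \<Rightarrow> (nat \<Rightarrow> 'a::euclidean_space) \<Rightarrow> 'a \<Rightarrow> nat \<Rightarrow> real" where
  "weight l n y \<theta> i = (1 / (1 + l * (\<theta> \<bullet> y i))) / (\<Sum>j<n. 1 / (1 + l * (\<theta> \<bullet> y j)))"

end

theory Submission
  imports Defs
begin

lemma tangent_weak:
  fixes f :: "'a::real_normed_vector \<Rightarrow> real"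
  assumes cvx: "\<And>u v t. u\<in>S \<Longrightarrow> v\<in>S \<Longrightarrow> 0<t \<Longrightarrow> t<1 \<Longrightarrow> f ((1-t)*\<^sub>R u + t*\<^sub>R v) \<le> (1-t)*f u + t*f v"
   and S: "convex S" and der: "(f has_derivative f') (at x within S)" and x: "x\<in>S" and z: "z\<in>S"
  shows "f x + f' (z - x) \<le> f z"
proof -
  have bl: "bounded_linear f'" using der by (simp add: has_derivative_within_alt)
  have "f' (z - x) \<le> (f z - f x) + e" if e: "e > 0" for e
  proof (cases "z = x")
    case True
    then show ?thesis using bl e by (simp add: linear_simps)
  next
    case False
    define N where "N = norm (z - x)"
    have N: "N > 0" using False by (simp add: N_def)
    obtain d where d: "d > 0" and dd: "\<And>y. y\<in>S \<Longrightarrow> norm (y - x) < d \<Longrightarrow> norm (f y - f x - f' (y - x)) \<le> (e/N) * norm (y - x)"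
      using der e N unfolding has_derivative_within_alt by (meson divide_pos_pos)
    define t where "t = min (1/2) (d/(2*N))"
    have t0: "0 < t" and t1: "t < 1" using d N by (auto simp: t_def)
    define y where "y = (1-t) *\<^sub>R x + t *\<^sub>R z"
    have yS: "y \<in> S" using S x z t0 t1 unfolding y_def by (simp add: convex_def)
    have yx: "y - x = t *\<^sub>R (z - x)" by (simp add: y_def algebra_simps)
    have ny: "norm (y - x) = t * N" using t0 by (simp add: yx N_def)
    have "t * N \<le> d/2" using N d by (simp add: t_def min_def field_simps)
    then have "norm (y - x) < d" using ny d by simp
    then have "norm (f y - f x - f' (y - x)) \<le> (e/N) * norm (y - x)" using dd yS by blast
    then have "norm (f y - f x - f' (y - x)) \<le> (e/N) * (t*N)" using ny by simp
    also have "\<dots> = e * t" using N by simp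
    finally have "\<bar>f y - f x - t * f' (z - x)\<bar> \<le> e * t"
      using bl by (simp add: yx linear_simps)
    then have "t * f' (z - x) \<le> f y - f x + e * t" by linarith
    moreover have "f y \<le> (1-t) * f x + t * f z" using cvx[OF x z t0 t1] by (simp add: y_def)
    ultimately have "t * f' (z - x) \<le> t * ((f z - f x) + e)" by (simp add: algebra_simps)
    then show ?thesis using t0 by simp
  qed
  then have "f' (z - x) \<le> f z - f x" by (rule field_le_epsilon)
  then show ?thesis by simp
qed

lemma tangent_strict:
  fixes f :: "'a::real_normed_vector \<Rightarrow> real"
  assumes sc: "strictly_convex_on S f"
   and S: "convex S" and der: "(f has_derivative f') (at x within S)" and x: "x\<in>S" and y: "y\<in>S"
   and xy: "x \<noteq> y"
  shows "f x + f' (y - x) < f y"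
proof -
  have bl: "bounded_linear f'" using der by (simp add: has_derivative_within_alt)
  have cvx: "f ((1-t)*\<^sub>R u + t*\<^sub>R v) \<le> (1-t)*f u + t*f v" if "u\<in>S" "v\<in>S" "0<t" "t<1" for u v t
  proof (cases "u = v")
    case True then show ?thesis by (simp add: algebra_simps)
  next
    case False then show ?thesis using sc that unfolding strictly_convex_on_def by (simp add: less_imp_le)
  qed
  define m where "m = (1 - 1/2) *\<^sub>R x + (1/2) *\<^sub>R y"
  have mS: "m \<in> S" using S x y unfolding m_def by (simp add: convex_def)
  have fm: "f m < (1 - 1/2) * f x + (1/2) * f y" using sc x y xy unfolding strictly_convex_on_def m_def
    by (metis field_sum_of_halves half_gt_zero_iff less_add_same_cancel1 zero_less_one)
  have "f x + f' (m - x) \<le> f m" by (rule tangent_weak[OF cvx S der x mS])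
  moreover have "m - x = (1/2) *\<^sub>R (y - x)"
  proof -
    have "x = (1/2) *\<^sub>R x + (1/2) *\<^sub>R x" by (metis scaleR_add_left field_sum_of_halves scaleR_one)
    then show ?thesis unfolding m_def by (simp add: algebra_simps)
  qed
  ultimately have "f x + (1/2) * f' (y - x) \<le> f m" using bl by (simp add: linear_simps)
  then show ?thesis using fm by simp
qed

lemma lam_grad_facts:
  fixes g t :: "'a::euclidean_space"
  assumes s: "1 - l*(g \<bullet> t) \<noteq> 0"
  shows "1 + l*(t \<bullet> lam_grad l g t) = 1/(1 - l*(g \<bullet> t))"
    and "g = (1/(1 + l*(t \<bullet> lam_grad l g t))) *\<^sub>R lam_grad l g t"
proof -
  show 1: "1 + l*(t \<bullet> lam_grad l g t) = 1/(1 - l*(g \<bullet> t))"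
    using s by (simp add: lam_grad_def inner_commute field_simps)
  show "g = (1/(1 + l*(t \<bullet> lam_grad l g t))) *\<^sub>R lam_grad l g t"
    unfolding 1 using s by (simp add: lam_grad_def)
qed

lemma kernel_pos:
  assumes "lam_density l \<nu> F \<theta> x > 0"
  shows "1 + l*(\<theta> \<bullet> F x) > 0"
proof (rule ccontr)
  assume "\<not> ?thesis"
  then have "pos_part (1 + l*(\<theta> \<bullet> F x)) = 0" by (simp add: pos_part_def)
  then show False using assms by (simp add: lam_density_def lam_kernel_def)
qed

theorem theorem1:
  fixes l :: real
    and \<nu> :: "'x measure"
    and F :: "'x \<Rightarrow> 'a::euclidean_space"
    and g\<phi> g\<psi> :: "'a \<Rightarrow> 'a"
    and \<Xi> :: "'a set"
    and S :: "'x set"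
    and n :: nat
    and xs :: "nat \<Rightarrow> 'x"
    and \<theta>0 :: 'a
    and \<theta> :: "nat \<Rightarrow> 'a"
  defines "\<Theta> \<equiv> nat_param_set l \<nu> F"
    and "\<phi> \<equiv> lam_phi l \<nu> F"
    and "\<psi> \<equiv> lam_psi l \<nu> F"
    and "y \<equiv> (\<lambda>i. F (xs i))"
  assumes lam_neg: "l < 0"
    and F_meas: "F \<in> borel_measurable \<nu>"
    (* regularity condition (Wong & Zhang 2022, Cond. III.10), as in the standing assumptions *)
    and Theta_open: "open \<Theta>"
    and phi_grad: "\<And>t. t \<in> \<Theta> \<Longrightarrow> GDERIV \<phi> t :> g\<phi> t"
    and phi_pos: "\<And>t. t \<in> \<Theta> \<Longrightarrow> 1 - l * (g\<phi> t \<bullet> t) > 0"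
    and Xi_def: "\<Xi> = (\<lambda>t. lam_grad l (g\<phi> t) t) ` \<Theta>"
    and psi_grad: "\<And>e. e \<in> \<Xi> \<Longrightarrow> GDERIV \<psi> e :> g\<psi> e"
    and psi_strict: "strictly_convex_on \<Xi> (\<lambda>e. (exp (l * \<psi> e) - 1) / l)"
    and diffeo_phi: "(\<lambda>t. lam_grad l (g\<phi> t) t) differentiable_on \<Theta>"
    and diffeo_psi: "(\<lambda>e. lam_grad l (g\<psi> e) e) differentiable_on \<Xi>"
    and inv1: "\<And>t. t \<in> \<Theta> \<Longrightarrow> lam_grad l (g\<psi> (lam_grad l (g\<phi> t) t)) (lam_grad l (g\<phi> t) t) = t"
    and inv2: "\<And>e. e \<in> \<Xi> \<Longrightarrow> lam_grad l (g\<psi> e) e \<in> \<Theta>"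
    and inv3: "\<And>e. e \<in> \<Xi> \<Longrightarrow> lam_grad l (g\<phi> (lam_grad l (g\<psi> e) e)) (lam_grad l (g\<psi> e) e) = e"
    and Xi_convex: "convex \<Xi>"
    and support: "\<And>t. t \<in> \<Theta> \<Longrightarrow> {x \<in> space \<nu>. lam_density l \<nu> F t x > 0} = S"
    and support_in_Xi: "F ` S \<subseteq> \<Xi>"
    (* data and iteration *)
    and n_pos: "n \<ge> 1"
    and data: "\<And>i. i < n \<Longrightarrow> xs i \<in> S"
    and theta0: "\<theta>0 \<in> \<Theta>"
    and iter0: "\<theta> 0 = \<theta>0"
    and iterSuc: "\<And>k. \<theta> (Suc k) =
        (let \<eta> = (\<Sum>i<n. weight l n y (\<theta> k) i *\<^sub>R y i) in lam_grad l (g\<psi> \<eta>) \<eta>)"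
  shows "\<forall>k. lam_grad l (g\<phi> (\<theta> k)) (\<theta> k) \<noteq> (\<Sum>i<n. weight l n y (\<theta> k) i *\<^sub>R y i)
           \<longrightarrow> loglik l \<phi> n y (\<theta> (Suc k)) > loglik l \<phi> n y (\<theta> k)"
proof -
  have l0: "l \<noteq> 0" using lam_neg by simp
  define E where "E = (\<lambda>t. lam_grad l (g\<phi> t) t)"
  define T where "T = (\<lambda>e. lam_grad l (g\<psi> e) e)"
  have EXi: "\<And>t. t\<in>\<Theta> \<Longrightarrow> E t \<in> \<Xi>" using Xi_def E_def by auto
  have TTh: "\<And>e. e\<in>\<Xi> \<Longrightarrow> T e \<in> \<Theta>" using inv2 T_def by auto
  have TE: "\<And>t. t\<in>\<Theta> \<Longrightarrow> T (E t) = t" using inv1 unfolding T_def E_def by auto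
  have ET: "\<And>e. e\<in>\<Xi> \<Longrightarrow> E (T e) = e" using inv3 unfolding T_def E_def by auto
  have cE: "1 + l*(t \<bullet> E t) > 0 \<and> g\<phi> t = (1/(1 + l*(t \<bullet> E t))) *\<^sub>R E t" if t: "t\<in>\<Theta>" for t
  proof -
    have s: "1 - l*(g\<phi> t \<bullet> t) > 0" using phi_pos[OF t] .
    then have s': "1 - l*(g\<phi> t \<bullet> t) \<noteq> 0" by simp
    show ?thesis using lam_grad_facts[OF s'] s unfolding E_def by auto
  qed
  have cT: "1 + l*(T e \<bullet> e) > 0 \<and> g\<phi> (T e) = (1/(1 + l*(T e \<bullet> e))) *\<^sub>R e" if e: "e\<in>\<Xi>" for e
    using cE[OF TTh[OF e]] ET[OF e] by simp
  have gT: "g\<psi> e = (1/(1 + l*(T e \<bullet> e))) *\<^sub>R T e" if e: "e\<in>\<Xi>" and ne: "T e \<noteq> 0" for e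
  proof -
    have s: "1 - l*(g\<psi> e \<bullet> e) \<noteq> 0"
    proof
      assume "1 - l*(g\<psi> e \<bullet> e) = 0"
      then have "T e = 0" by (simp add: T_def lam_grad_def)
      with ne show False by simp
    qed
    from lam_grad_facts(2)[OF s] show ?thesis by (simp add: T_def inner_commute)
  qed
  define Q where "Q = (\<lambda>e. \<phi> (T e) - (1/l) * ln (1 + l*(T e \<bullet> e)))"
  have DQ: "(Q has_derivative (\<lambda>h. - ((T e \<bullet> h) / (1 + l*(T e \<bullet> e))))) (at e within \<Xi>)"
    if e: "e\<in>\<Xi>" for e
  proof -
    obtain DT where DT: "(T has_derivative DT) (at e within \<Xi>)"
      using diffeo_psi e unfolding differentiable_on_def differentiable_def T_def by blast
    have Dphi: "(\<phi> has_derivative (\<lambda>h. h \<bullet> g\<phi> (T e))) (at (T e))"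
      using phi_grad[OF TTh[OF e]] by (simp add: gderiv_def)
    have D1: "((\<lambda>e. \<phi> (T e)) has_derivative (\<lambda>h. DT h \<bullet> g\<phi> (T e))) (at e within \<Xi>)"
      using has_derivative_compose[OF DT Dphi] .
    define c where "c = 1 + l*(T e \<bullet> e)"
    have c: "c > 0" using cT[OF e] by (simp add: c_def)
    have D2: "((\<lambda>e. 1 + l*(T e \<bullet> e)) has_derivative (\<lambda>h. 0 + l * (T e \<bullet> h + DT h \<bullet> e))) (at e within \<Xi>)"
      by (intro has_derivative_add has_derivative_const has_derivative_mult_right has_derivative_inner DT has_derivative_ident)
    have D3: "((\<lambda>e. ln (1 + l*(T e \<bullet> e))) has_derivative (\<lambda>h. (0 + l * (T e \<bullet> h + DT h \<bullet> e)) * inverse c)) (at e within \<Xi>)"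
      using DERIV_compose_FDERIV[OF DERIV_ln D2] c by (simp add: c_def)
    have D4: "(Q has_derivative (\<lambda>h. DT h \<bullet> g\<phi> (T e) - (1/l) * ((0 + l * (T e \<bullet> h + DT h \<bullet> e)) * inverse c))) (at e within \<Xi>)"
      unfolding Q_def by (intro has_derivative_diff has_derivative_mult_right D1 D3)
    have eq: "(\<lambda>h. DT h \<bullet> g\<phi> (T e) - (1/l) * ((0 + l * (T e \<bullet> h + DT h \<bullet> e)) * inverse c))
       = (\<lambda>h. - ((T e \<bullet> h) / c))"
    proof
      fix h
      have "DT h \<bullet> g\<phi> (T e) = (DT h \<bullet> e) / c" using cT[OF e] by (simp add: c_def)
      then show "DT h \<bullet> g\<phi> (T e) - (1/l) * ((0 + l * (T e \<bullet> h + DT h \<bullet> e)) * inverse c) = - ((T e \<bullet> h) / c)"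
        using l0 c by (simp add: field_simps)
    qed
    from D4 have "(Q has_derivative (\<lambda>h. - ((T e \<bullet> h) / c))) (at e within \<Xi>)" by (simp only: eq)
    then show ?thesis by (simp only: c_def)
  qed
  define R where "R = (\<lambda>e. Q e + \<psi> e)"
  have DR: "(R has_derivative (\<lambda>h. - ((T e \<bullet> h) / (1 + l*(T e \<bullet> e))) + h \<bullet> g\<psi> e)) (at e within \<Xi>)"
    if e: "e\<in>\<Xi>" for e
  proof -
    have "(\<psi> has_derivative (\<lambda>h. h \<bullet> g\<psi> e)) (at e within \<Xi>)"
      using psi_grad[OF e] by (simp add: gderiv_def has_derivative_at_withinI)
    then show ?thesis unfolding R_def by (intro has_derivative_add DQ e)
  qed
  have contR: "continuous_on \<Xi> R"
    using DR has_derivative_continuous continuous_on_eq_continuous_within by blast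
  have Rconst: "R e = R e'" if e: "e\<in>\<Xi>" and e': "e'\<in>\<Xi>" for e e'
  proof (rule has_derivative_zero_unique_strong_convex[of \<Xi> "{E 0}" R e' "R e'" e])
    show "convex \<Xi>" by (rule Xi_convex)
    show "finite {E 0}" by simp
    show "continuous_on \<Xi> R" by (rule contR)
    show "e' \<in> \<Xi>" "R e' = R e'" "e \<in> \<Xi>" using e e' by auto
    show "(R has_derivative (\<lambda>h. 0)) (at x within \<Xi>)" if x: "x \<in> \<Xi> - {E 0}" for x
    proof -
      have xX: "x \<in> \<Xi>" using x by simp
      have ne: "T x \<noteq> 0"
      proof
        assume "T x = 0"
        then have "x = E 0" using ET[OF xX] by simp
        with x show False by simp
      qed
      have "(\<lambda>h. - ((T x \<bullet> h) / (1 + l*(T x \<bullet> x))) + h \<bullet> g\<psi> x) = (\<lambda>h. 0)"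
        using gT[OF xX ne] by (simp add: inner_commute)
      then show ?thesis using DR[OF xX] by simp
    qed
  qed
  have psi_eq: "\<psi> e = R e0 - Q e" if "e\<in>\<Xi>" "e0\<in>\<Xi>" for e e0
    using Rconst[OF that] by (simp add: R_def)
  have Dpsi: "(\<psi> has_derivative (\<lambda>h. (T e0 \<bullet> h) / (1 + l*(T e0 \<bullet> e0)))) (at e0 within \<Xi>)"
    if e0: "e0\<in>\<Xi>" for e0
  proof -
    have "((\<lambda>e. R e0 - Q e) has_derivative (\<lambda>h. 0 - (- ((T e0 \<bullet> h) / (1 + l*(T e0 \<bullet> e0)))))) (at e0 within \<Xi>)"
      by (intro has_derivative_diff has_derivative_const DQ e0)
    then have "((\<lambda>e. R e0 - Q e) has_derivative (\<lambda>h. (T e0 \<bullet> h) / (1 + l*(T e0 \<bullet> e0)))) (at e0 within \<Xi>)"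
      by simp
    moreover have "\<And>x. x \<in> \<Xi> \<Longrightarrow> \<psi> x = R e0 - Q x" using psi_eq e0 by blast
    ultimately show ?thesis using has_derivative_transform[of e0 \<Xi> \<psi> "\<lambda>e. R e0 - Q e"] e0 by blast
  qed
  define H where "H = (\<lambda>e. (exp (l * \<psi> e) - 1) / l)"
  have DH: "(H has_derivative (\<lambda>h. exp (l * \<psi> e0) * ((T e0 \<bullet> h) / (1 + l*(T e0 \<bullet> e0))))) (at e0 within \<Xi>)"
    if e0: "e0\<in>\<Xi>" for e0
  proof -
    have "((\<lambda>e. l * \<psi> e) has_derivative (\<lambda>h. l * ((T e0 \<bullet> h) / (1 + l*(T e0 \<bullet> e0))))) (at e0 within \<Xi>)"
      by (intro has_derivative_mult_right Dpsi e0)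
    from DERIV_compose_FDERIV[OF DERIV_exp this]
    have "((\<lambda>e. exp (l * \<psi> e)) has_derivative (\<lambda>h. l * ((T e0 \<bullet> h) / (1 + l*(T e0 \<bullet> e0))) * exp (l * \<psi> e0))) (at e0 within \<Xi>)" .
    then have "((\<lambda>e. (1/l) * (exp (l * \<psi> e) - 1)) has_derivative (\<lambda>h. (1/l) * (l * ((T e0 \<bullet> h) / (1 + l*(T e0 \<bullet> e0))) * exp (l * \<psi> e0) - 0))) (at e0 within \<Xi>)"
      by (intro has_derivative_mult_right has_derivative_diff has_derivative_const)
    moreover have "(\<lambda>e. (1/l) * (exp (l * \<psi> e) - 1)) = H" by (auto simp: H_def)
    moreover have "(\<lambda>h. (1/l) * (l * ((T e0 \<bullet> h) / (1 + l*(T e0 \<bullet> e0))) * exp (l * \<psi> e0) - 0))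
        = (\<lambda>h. exp (l * \<psi> e0) * ((T e0 \<bullet> h) / (1 + l*(T e0 \<bullet> e0))))" using l0 by auto
    ultimately show ?thesis by simp
  qed
  have Hsc: "strictly_convex_on \<Xi> H" using psi_strict by (simp add: H_def)
  have key: "(1/l) * ln (1 + l*(t \<bullet> \<eta>)) - \<phi> t < (1/l) * ln (1 + l*(T \<eta> \<bullet> \<eta>)) - \<phi> (T \<eta>)"
    if t: "t \<in> \<Theta>" and eta: "\<eta> \<in> \<Xi>" and ne: "E t \<noteq> \<eta>" and pos: "1 + l*(t \<bullet> \<eta>) > 0" for t \<eta>
  proof -
    define e0 where "e0 = E t"
    have e0: "e0 \<in> \<Xi>" using EXi[OF t] by (simp add: e0_def)
    have Te0: "T e0 = t" using TE[OF t] by (simp add: e0_def)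
    define c0 where "c0 = 1 + l*(t \<bullet> e0)"
    have c0: "c0 > 0" using cE[OF t] by (simp add: c0_def e0_def)
    have "H e0 + exp (l * \<psi> e0) * ((T e0 \<bullet> (\<eta> - e0)) / (1 + l*(T e0 \<bullet> e0))) < H \<eta>"
      using tangent_strict[OF Hsc Xi_convex DH[OF e0] e0 eta] ne by (simp add: e0_def)
    then have "H e0 + exp (l * \<psi> e0) * ((t \<bullet> \<eta> - t \<bullet> e0) / c0) < H \<eta>"
      by (simp add: Te0 c0_def inner_diff_right)
    then have "l * H \<eta> < l * (H e0 + exp (l * \<psi> e0) * ((t \<bullet> \<eta> - t \<bullet> e0) / c0))"
      using lam_neg by (simp add: mult_less_cancel_left_neg)
    then have "l * H \<eta> < l * H e0 + exp (l * \<psi> e0) * (l * (t \<bullet> \<eta> - t \<bullet> e0) / c0)"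
      by (simp add: distrib_left mult.left_commute)
    moreover have lH: "\<And>x. l * H x = exp (l * \<psi> x) - 1" using l0 by (simp add: H_def)
    ultimately have "exp (l * \<psi> \<eta>) - 1 < exp (l * \<psi> e0) - 1 + exp (l * \<psi> e0) * (l * (t \<bullet> \<eta> - t \<bullet> e0) / c0)"
      by simp
    also have "exp (l * \<psi> e0) - 1 + exp (l * \<psi> e0) * (l * (t \<bullet> \<eta> - t \<bullet> e0) / c0)
        = exp (l * \<psi> e0) * ((1 + l*(t \<bullet> \<eta>)) / c0) - 1"
      using c0 by (simp add: c0_def field_simps)
    finally have "exp (l * \<psi> \<eta>) < exp (l * \<psi> e0) * ((1 + l*(t \<bullet> \<eta>)) / c0)" by simp
    then have "ln (exp (l * \<psi> \<eta>)) < ln (exp (l * \<psi> e0) * ((1 + l*(t \<bullet> \<eta>)) / c0))"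
    proof -
      have "exp (l * \<psi> e0) * ((1 + l*(t \<bullet> \<eta>)) / c0) > 0" using pos c0 by simp
      with \<open>exp (l * \<psi> \<eta>) < exp (l * \<psi> e0) * ((1 + l*(t \<bullet> \<eta>)) / c0)\<close> show ?thesis
        by (subst ln_less_cancel_iff) auto
    qed
    also have "\<dots> = l * \<psi> e0 + ln (1 + l*(t \<bullet> \<eta>)) - ln c0"
      using pos c0 by (simp add: ln_mult ln_div)
    finally have "l * \<psi> \<eta> < l * \<psi> e0 + ln (1 + l*(t \<bullet> \<eta>)) - ln c0" by simp
    then have "l * \<psi> \<eta> < l * (\<psi> e0 + (1/l) * ln (1 + l*(t \<bullet> \<eta>)) - (1/l) * ln c0)"
      using l0 by (simp add: algebra_simps)
    then have ineq: "\<psi> e0 + (1/l) * ln (1 + l*(t \<bullet> \<eta>)) - (1/l) * ln c0 < \<psi> \<eta>"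
      using lam_neg by (simp add: mult_less_cancel_left_neg)
    have p1: "\<psi> \<eta> = R e0 - \<phi> (T \<eta>) + (1/l) * ln (1 + l*(T \<eta> \<bullet> \<eta>))"
      using psi_eq[OF eta e0] by (simp add: Q_def)
    have p2: "\<psi> e0 = R e0 - \<phi> t + (1/l) * ln c0"
      using psi_eq[OF e0 e0] by (simp add: Q_def Te0 c0_def)
    show ?thesis using ineq p1 p2 by simp
  qed
  have n0: "0 \<in> {..<n}" using n_pos by simp
  then have ne: "{..<n} \<noteq> {}" by blast
  have datafacts: "(\<Sum>i<n. weight l n y t i *\<^sub>R y i) \<in> \<Xi> \<and> (\<forall>i<n. 1 + l*(t \<bullet> y i) > 0)"
    if t: "t \<in> \<Theta>" for t
  proof -
    have apos: "\<forall>i<n. 1 + l*(t \<bullet> y i) > 0"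
    proof (intro allI impI)
      fix i assume i: "i < n"
      have "xs i \<in> {x \<in> space \<nu>. lam_density l \<nu> F t x > 0}" using data[OF i] support[OF t] by simp
      then show "1 + l*(t \<bullet> y i) > 0" using kernel_pos by (auto simp: y_def)
    qed
    define A where "A = (\<Sum>j<n. 1 / (1 + l*(t \<bullet> y j)))"
    have A: "A > 0" unfolding A_def using apos n_pos
      by (intro sum_pos) (use ne in auto)
    have w: "weight l n y t i = (1 / (1 + l*(t \<bullet> y i))) / A" for i
      by (simp add: weight_def A_def)
    have "(\<Sum>i<n. weight l n y t i) = 1" unfolding w sum_divide_distrib[symmetric] A_def[symmetric] using A by simp
    moreover have "\<And>i. i \<in> {..<n} \<Longrightarrow> weight l n y t i \<ge> 0" using apos A by (simp add: w less_imp_le)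
    moreover have "\<And>i. i \<in> {..<n} \<Longrightarrow> y i \<in> \<Xi>" using data support_in_Xi by (auto simp: y_def)
    ultimately have "(\<Sum>i<n. weight l n y t i *\<^sub>R y i) \<in> \<Xi>"
      by (intro convex_sum Xi_convex) auto
    with apos show ?thesis by blast
  qed
  have thetaTh: "\<theta> k \<in> \<Theta>" for k
  proof (induction k)
    case 0 then show ?case using theta0 iter0 by simp
  next
    case (Suc k)
    have "\<theta> (Suc k) = T (\<Sum>i<n. weight l n y (\<theta> k) i *\<^sub>R y i)" using iterSuc by (simp add: T_def Let_def)
    then show ?case using TTh datafacts[OF Suc] by simp
  qed
  show ?thesis
  proof (intro allI impI)
    fix k
    assume neq: "lam_grad l (g\<phi> (\<theta> k)) (\<theta> k) \<noteq> (\<Sum>i<n. weight l n y (\<theta> k) i *\<^sub>R y i)"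
    define t where "t = \<theta> k"
    define \<eta> where "\<eta> = (\<Sum>i<n. weight l n y t i *\<^sub>R y i)"
    define t' where "t' = \<theta> (Suc k)"
    have t: "t \<in> \<Theta>" using thetaTh t_def by simp
    have eta: "\<eta> \<in> \<Xi>" using datafacts[OF t] \<eta>_def by simp
    have t'eq: "t' = T \<eta>" using iterSuc by (simp add: T_def Let_def t'_def \<eta>_def t_def)
    have t': "t' \<in> \<Theta>" using thetaTh t'_def by simp
    have ne': "E t \<noteq> \<eta>" using neq by (simp add: E_def t_def \<eta>_def)
    define a where "a = (\<lambda>i. 1 + l*(t \<bullet> y i))"
    define b where "b = (\<lambda>i. 1 + l*(t' \<bullet> y i))"
    have apos: "\<And>i. i<n \<Longrightarrow> a i > 0" using datafacts[OF t] by (simp add: a_def)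
    have bpos: "\<And>i. i<n \<Longrightarrow> b i > 0" using datafacts[OF t'] by (simp add: b_def)
    define A where "A = (\<Sum>j<n. 1 / a j)"
    have A: "A > 0" unfolding A_def using apos n_pos by (intro sum_pos) (use ne in auto)
    have w: "weight l n y t i = (1 / a i) / A" for i
      by (simp add: weight_def A_def a_def)
    have sw: "(\<Sum>i<n. weight l n y t i) = 1" unfolding w sum_divide_distrib[symmetric] A_def[symmetric] using A by simp
    have lin: "(\<Sum>i<n. weight l n y t i * (1 + l*(s \<bullet> y i))) = 1 + l*(s \<bullet> \<eta>)" for s
    proof -
      have "(\<Sum>i<n. weight l n y t i * (1 + l*(s \<bullet> y i)))
          = (\<Sum>i<n. weight l n y t i) + l * (\<Sum>i<n. weight l n y t i * (s \<bullet> y i))"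
        by (simp add: algebra_simps sum.distrib sum_distrib_left)
      also have "(\<Sum>i<n. weight l n y t i * (s \<bullet> y i)) = s \<bullet> \<eta>"
        by (simp add: \<eta>_def inner_sum_right)
      finally show ?thesis using sw by simp
    qed
    have ca: "1 + l*(t \<bullet> \<eta>) = real n / A"
    proof -
      have "(\<Sum>i<n. weight l n y t i * (1 + l*(t \<bullet> y i))) = (\<Sum>i<n. 1 / A)"
      proof (intro sum.cong refl)
        fix i assume "i \<in> {..<n}"
        then have "a i \<noteq> 0" using apos by force
        then show "weight l n y t i * (1 + l*(t \<bullet> y i)) = 1 / A" by (simp add: w a_def)
      qed
      then show ?thesis using lin[of t] by simp
    qed
    have cb: "1 + l*(t' \<bullet> \<eta>) = (\<Sum>i<n. b i / a i) / A"
    proof -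
      have "(\<Sum>i<n. weight l n y t i * (1 + l*(t' \<bullet> y i))) = (\<Sum>i<n. (b i / a i) / A)"
        by (intro sum.cong) (auto simp: w b_def)
      then show ?thesis using lin[of t'] by (simp add: sum_divide_distrib)
    qed
    have cpos: "1 + l*(t \<bullet> \<eta>) > 0" using ca A n_pos by simp
    have c'pos: "1 + l*(t' \<bullet> \<eta>) > 0" using cT[OF eta] t'eq by simp
    define M where "M = (1 + l*(t' \<bullet> \<eta>)) / (1 + l*(t \<bullet> \<eta>))"
    have M: "M > 0" using cpos c'pos by (simp add: M_def)
    have each: "ln (b i) - ln (a i) - ln M \<le> b i / (a i * M) - 1" if i: "i < n" for i
    proof -
      have "ln (b i / (a i * M)) \<le> b i / (a i * M) - 1"
        using apos[OF i] bpos[OF i] M by (intro ln_le_minus_one) simp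
      moreover have "ln (b i / (a i * M)) = ln (b i) - ln (a i) - ln M"
        using apos[OF i] bpos[OF i] M by (simp add: ln_div ln_mult)
      ultimately show ?thesis by simp
    qed
    have "(\<Sum>i<n. ln (b i) - ln (a i) - ln M) \<le> (\<Sum>i<n. b i / (a i * M) - 1)"
      using each by (intro sum_mono) auto
    moreover have "(\<Sum>i<n. b i / (a i * M) - 1) = (\<Sum>i<n. b i / a i) / M - real n"
      by (simp add: sum_subtractf sum_divide_distrib)
    moreover have "(\<Sum>i<n. b i / a i) / M = real n"
    proof -
      have S1: "(\<Sum>i<n. b i / a i) = A * (1 + l*(t' \<bullet> \<eta>))" using cb A by (simp add: field_simps)
      have S2: "real n = A * (1 + l*(t \<bullet> \<eta>))" using ca A by (simp add: field_simps)
      show ?thesis unfolding S1 S2 M_def using c'pos cpos by simp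
    qed
    ultimately have sumineq: "(\<Sum>i<n. ln (b i) - ln (a i)) \<le> real n * (ln (1 + l*(t' \<bullet> \<eta>)) - ln (1 + l*(t \<bullet> \<eta>)))"
      using cpos c'pos by (simp add: sum_subtractf M_def ln_div)
    have ll: "loglik l \<phi> n y s = (1/l) * (\<Sum>i<n. ln (1 + l*(s \<bullet> y i))) - real n * \<phi> s" for s
      by (simp add: loglik_def sum_subtractf sum_distrib_left)
    have diff: "loglik l \<phi> n y t' - loglik l \<phi> n y t = (1/l) * (\<Sum>i<n. ln (b i) - ln (a i)) - real n * (\<phi> t' - \<phi> t)"
      by (simp add: ll a_def b_def sum_subtractf algebra_simps)
    have "(1/l) * (real n * (ln (1 + l*(t' \<bullet> \<eta>)) - ln (1 + l*(t \<bullet> \<eta>)))) \<le> (1/l) * (\<Sum>i<n. ln (b i) - ln (a i))"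
      using sumineq lam_neg by (intro mult_left_mono_neg) auto
    then have ge: "loglik l \<phi> n y t' - loglik l \<phi> n y t \<ge>
        real n * (((1/l) * ln (1 + l*(t' \<bullet> \<eta>)) - \<phi> t') - ((1/l) * ln (1 + l*(t \<bullet> \<eta>)) - \<phi> t))"
      unfolding diff by (simp add: algebra_simps)
    have "((1/l) * ln (1 + l*(t \<bullet> \<eta>)) - \<phi> t) < ((1/l) * ln (1 + l*(t' \<bullet> \<eta>)) - \<phi> t')"
      using key[OF t eta ne' cpos] t'eq by simp
    then have "real n * (((1/l) * ln (1 + l*(t' \<bullet> \<eta>)) - \<phi> t') - ((1/l) * ln (1 + l*(t \<bullet> \<eta>)) - \<phi> t)) > 0"
      using n_pos by simp
    with ge show "loglik l \<phi> n y (\<theta> (Suc k)) > loglik l \<phi> n y (\<theta> k)"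
      by (simp add: t_def t'_def)
  qed
qed

end
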